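(* For $n\ge i+1\ge2$, \[ D_{n,i}=z^{i-1}\tau_iD_{n-i}-z^{i+2}\tau_{i-1}D_{n-i-1}, \] where the polynomials $\tau_i=\tau_i(z)$ are defined by $\sum_{i\ge0}\tau_iw^i=\dfrac{w}{1-2w+w^2-z^3w^3}$.
   Context: For $h\ge1$, $D_h=D_h(z)$ is the determinant of the $h\times h$ matrix $T_h$ (rows/columns indexed $0,\dots,h-1$) with entries $(T_h)_{p,p}=1$, $(T_h)_{p,p+1}=-2z$, $(T_h)_{p,p+2}=z^2$, $(T_h)_{p+1,p}=-z^2$, and all other entries $0$; $D_0=1$. Let $M_n=T_n^{\mathsf T}$ (the transpose, so $\det M_n=D_n$). For $1\le i\le n$, $D_{n,i}$ denotes the determinant of the matrix obtained from $M_n$ by replacing its $i$-th column (columns numbered $1,\dots,n$) by the vector $(1,0,\dots,0)^{\mathsf T}$. *)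

theory Defs
  imports "Jordan_Normal_Form.Determinant" "HOL-Computational_Algebra.Formal_Power_Series"
begin

definition T_mat :: "nat \<Rightarrow> 'a::field \<Rightarrow> 'a mat" where
  "T_mat h z = mat h h (\<lambda>(p, q).
     if q = p then 1
     else if q = p + 1 then - 2 * z
     else if q = p + 2 then z ^ 2
     else if p = q + 1 then - (z ^ 2)
     else 0)"

definition D :: "nat \<Rightarrow> 'a::field \<Rightarrow> 'a" where
  "D h z = (if h = 0 then 1 else det (T_mat h z))"

definition M_mat :: "nat \<Rightarrow> 'a::field \<Rightarrow> 'a mat" where
  "M_mat n z = transpose_mat (T_mat n z)"

text \<open>D_{n,i}: determinant of M_n with its i-th column (columns numbered 1..n)
  replaced by (1,0,...,0)^T.\<close>
definition Dni :: "nat \<Rightarrow> nat \<Rightarrow> 'a::field \<Rightarrow> 'a" where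
  "Dni n i z = det (mat n n (\<lambda>(p, q).
      if q = i - 1 then (if p = 0 then 1 else 0) else M_mat n z $$ (p, q)))"

definition tau_fps :: "'a::field \<Rightarrow> 'a fps" where
  "tau_fps z = fps_X * inverse (1 - 2 * fps_X + fps_X ^ 2 - fps_const (z ^ 3) * fps_X ^ 3)"

definition tau :: "'a::field \<Rightarrow> nat \<Rightarrow> 'a" where
  "tau z i = fps_nth (tau_fps z) i"

end

theory Submission
  imports Defs
begin

definition Mt :: "nat \<Rightarrow> (nat \<Rightarrow> nat \<Rightarrow> 'a) \<Rightarrow> 'a mat" where
  "Mt n f = mat n n (\<lambda>(r, c). f r c)"

lemma Mt_carrier[simp]: "Mt n f \<in> carrier_mat n n"
  unfolding Mt_def by simp

lemma Mt_cong: "(\<And>r c. r < n \<Longrightarrow> c < n \<Longrightarrow> f r c = g r c) \<Longrightarrow> Mt n f = Mt n g"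
  unfolding Mt_def by (rule eq_matI) auto

lemma det_row_exp:
  "det (Mt (Suc s) f :: 'a::comm_ring_1 mat) = (\<Sum>j<Suc s. f s j * ((-1)^(s+j) *
      det (Mt s (\<lambda>r c. f r (if c < j then c else Suc c)))))"
proof -
  have "det (Mt (Suc s) f) = (\<Sum>j<Suc s. Mt (Suc s) f $$ (s,j) * cofactor (Mt (Suc s) f) s j)"
    by (rule laplace_expansion_row[OF Mt_carrier]) simp
  also have "\<dots> = (\<Sum>j<Suc s. f s j * ((-1)^(s+j) *
      det (Mt s (\<lambda>r c. f r (if c < j then c else Suc c)))))"
  proof (rule sum.cong[OF refl])
    fix j assume j: "j \<in> {..<Suc s}"
    have "mat_delete (Mt (Suc s) f) s j = Mt s (\<lambda>r c. f r (if c < j then c else Suc c))"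
      unfolding mat_delete_def Mt_def by (rule eq_matI) auto
    then show "Mt (Suc s) f $$ (s,j) * cofactor (Mt (Suc s) f) s j = f s j * ((-1)^(s+j) *
      det (Mt s (\<lambda>r c. f r (if c < j then c else Suc c))))"
      using j unfolding cofactor_def by (simp add: Mt_def)
  qed
  finally show ?thesis .
qed

lemma det_col_exp:
  "det (Mt (Suc s) f :: 'a::comm_ring_1 mat) = (\<Sum>i<Suc s. f i s * ((-1)^(i+s) *
      det (Mt s (\<lambda>r c. f (if r < i then r else Suc r) c))))"
proof -
  have "det (Mt (Suc s) f) = (\<Sum>i<Suc s. Mt (Suc s) f $$ (i,s) * cofactor (Mt (Suc s) f) i s)"
    by (rule laplace_expansion_column[OF Mt_carrier]) simp
  also have "\<dots> = (\<Sum>i<Suc s. f i s * ((-1)^(i+s) *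
      det (Mt s (\<lambda>r c. f (if r < i then r else Suc r) c))))"
  proof (rule sum.cong[OF refl])
    fix i assume i: "i \<in> {..<Suc s}"
    have "mat_delete (Mt (Suc s) f) i s = Mt s (\<lambda>r c. f (if r < i then r else Suc r) c)"
      unfolding mat_delete_def Mt_def by (rule eq_matI) auto
    then show "Mt (Suc s) f $$ (i,s) * cofactor (Mt (Suc s) f) i s = f i s * ((-1)^(i+s) *
      det (Mt s (\<lambda>r c. f (if r < i then r else Suc r) c)))"
      using i unfolding cofactor_def by (simp add: Mt_def)
  qed
  finally show ?thesis .
qed

lemma det_last_col:
  assumes "\<And>r. r < s \<Longrightarrow> f r s = 0"
  shows "det (Mt (Suc s) f :: 'a::comm_ring_1 mat) = f s s * det (Mt s f)"
proof -
  have "det (Mt (Suc s) f) = (\<Sum>i<s. f i s * ((-1)^(i+s) *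
      det (Mt s (\<lambda>r c. f (if r < i then r else Suc r) c)))) +
      f s s * ((-1)^(s+s) * det (Mt s (\<lambda>r c. f (if r < s then r else Suc r) c)))"
    by (simp add: det_col_exp)
  also have "(\<Sum>i<s. f i s * ((-1)^(i+s) *
      det (Mt s (\<lambda>r c. f (if r < i then r else Suc r) c)))) = 0"
    by (rule sum.neutral) (simp add: assms)
  also have "Mt s (\<lambda>r c. f (if r < s then r else Suc r) c) = Mt s f"
    by (rule Mt_cong) simp
  finally show ?thesis by (simp add: power_add)
qed

lemma det_last_row:
  assumes "\<And>c. c < s \<Longrightarrow> f s c = 0"
  shows "det (Mt (Suc s) f :: 'a::comm_ring_1 mat) = f s s * det (Mt s f)"
proof -
  have "det (Mt (Suc s) f) = (\<Sum>j<s. f s j * ((-1)^(s+j) *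
      det (Mt s (\<lambda>r c. f r (if c < j then c else Suc c))))) +
      f s s * ((-1)^(s+s) * det (Mt s (\<lambda>r c. f r (if c < s then c else Suc c))))"
    by (simp add: det_row_exp)
  also have "(\<Sum>j<s. f s j * ((-1)^(s+j) *
      det (Mt s (\<lambda>r c. f r (if c < j then c else Suc c))))) = 0"
    by (rule sum.neutral) (simp add: assms)
  also have "Mt s (\<lambda>r c. f r (if c < s then c else Suc c)) = Mt s f"
    by (rule Mt_cong) simp
  finally show ?thesis by (simp add: power_add)
qed

lemma det_Mt0[simp]: "det (Mt 0 f) = 1"
  by (rule det_dim_zero) simp

lemma tau_facts:
  fixes z :: "'a::field"
  shows "tau z 0 = 0" "tau z 1 = 1" "tau z 2 = 2"
    "tau z (Suc (Suc (Suc m))) = 2 * tau z (Suc (Suc m)) - tau z (Suc m) + z^3 * tau z m"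
proof -
  define Q :: "'a fps" where "Q = 1 - 2 * fps_X + fps_X ^ 2 - fps_const (z ^ 3) * fps_X ^ 3"
  define t where "t = tau_fps z"
  have Q0: "fps_nth Q 0 \<noteq> 0" unfolding Q_def by simp
  have "t * Q = fps_X" unfolding t_def tau_fps_def Q_def[symmetric]
    using inverse_mult_eq_1[OF Q0] by (simp add: mult.assoc)
  moreover have "t * Q = t - fps_const 2 * (t * fps_X^1) + t * fps_X^2 - fps_const (z^3) * (t * fps_X^3)"
    unfolding Q_def by (simp add: algebra_simps numeral_fps_const)
  ultimately have E: "\<And>n. fps_nth (t - fps_const 2 * (t * fps_X^1) + t * fps_X^2 - fps_const (z^3) * (t * fps_X^3)) n = fps_nth fps_X n"
    by metis
  show "tau z 0 = 0" using E[of 0] unfolding tau_def t_def[symmetric]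
    by (simp add: fps_X_power_mult_right_nth)
  show "tau z 1 = 1" using E[of 0] E[of 1] unfolding tau_def t_def[symmetric]
    by (simp add: fps_X_power_mult_right_nth)
  show "tau z 2 = 2" using E[of 0] E[of 1] E[of 2] unfolding tau_def t_def[symmetric]
    by (simp add: fps_X_power_mult_right_nth)
  show "tau z (Suc (Suc (Suc m))) = 2 * tau z (Suc (Suc m)) - tau z (Suc m) + z^3 * tau z m"
    using E[of "Suc (Suc (Suc m))"] unfolding tau_def t_def[symmetric]
    by (simp add: fps_X_power_mult_right_nth) (simp add: algebra_simps)
qed


definition Mf :: "'a::field \<Rightarrow> nat \<Rightarrow> nat \<Rightarrow> 'a" where
  "Mf z p q = (if p = q then 1 else if p = q + 1 then - 2 * z else if p = q + 2 then z ^ 2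
     else if q = p + 1 then - (z ^ 2) else 0)"

definition Af :: "'a::field \<Rightarrow> nat \<Rightarrow> nat \<Rightarrow> 'a" where
  "Af z r c = Mf z (Suc r) c"

definition Nf :: "'a::field \<Rightarrow> nat \<Rightarrow> nat \<Rightarrow> nat \<Rightarrow> 'a" where
  "Nf z k r c = Mf z (Suc r) (if c < k then c else Suc c)"

definition Dm :: "'a::field \<Rightarrow> nat \<Rightarrow> 'a" where
  "Dm z s = det (Mt s (Mf z))"

definition am :: "'a::field \<Rightarrow> nat \<Rightarrow> 'a" where
  "am z s = det (Mt s (Af z))"

definition Nn :: "'a::field \<Rightarrow> nat \<Rightarrow> nat \<Rightarrow> 'a" where
  "Nn z k m = det (Mt (k + m) (Nf z k))"

lemma Dm_rec: "Dm z (Suc (Suc (Suc s))) = Dm z (Suc (Suc s)) - 2 * z^3 * Dm z (Suc s) + z^6 * Dm z s"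
proof -
  define F where "F = (\<lambda>j. Mf z (Suc (Suc s)) j * ((-1)^(Suc (Suc s)+j) *
      det (Mt (Suc (Suc s)) (\<lambda>r c. Mf z r (if c < j then c else Suc c)))))"
  have "Dm z (Suc (Suc (Suc s))) = sum F {..<Suc (Suc (Suc s))}"
    unfolding Dm_def F_def by (rule det_row_exp)
  also have "\<dots> = sum F {..<s} + F s + F (Suc s) + F (Suc (Suc s))" by simp
  also have "sum F {..<s} = 0" by (rule sum.neutral) (simp add: F_def Mf_def)
  also have "F (Suc (Suc s)) = Dm z (Suc (Suc s))"
  proof -
    have "Mt (Suc (Suc s)) (\<lambda>r c. Mf z r (if c < Suc (Suc s) then c else Suc c)) = Mt (Suc (Suc s)) (Mf z)"
      by (rule Mt_cong) simp
    moreover have "Mf z (Suc (Suc s)) (Suc (Suc s)) = 1" by (simp add: Mf_def)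
    ultimately show ?thesis by (simp add: F_def Dm_def)
  qed
  also have "F (Suc s) = - 2 * z^3 * Dm z (Suc s)"
  proof -
    have "det (Mt (Suc (Suc s)) (\<lambda>r c. Mf z r (if c < Suc s then c else Suc c)))
       = - (z^2) * det (Mt (Suc s) (\<lambda>r c. Mf z r (if c < Suc s then c else Suc c)))"
      by (subst det_last_col) (auto simp: Mf_def)
    also have "Mt (Suc s) (\<lambda>r c. Mf z r (if c < Suc s then c else Suc c)) = Mt (Suc s) (Mf z)"
      by (rule Mt_cong) simp
    moreover have "Mf z (Suc (Suc s)) (Suc s) = - 2 * z" "Mf z (Suc s) (Suc (Suc s)) = - (z^2)"
      by (simp_all add: Mf_def)
    ultimately show ?thesis by (simp add: F_def Dm_def power_add eval_nat_numeral)
  qed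
  also have "F s = z^6 * Dm z s"
  proof -
    have "det (Mt (Suc (Suc s)) (\<lambda>r c. Mf z r (if c < s then c else Suc c)))
       = - (z^2) * det (Mt (Suc s) (\<lambda>r c. Mf z r (if c < s then c else Suc c)))"
      by (subst det_last_col) (auto simp: Mf_def)
    also have "det (Mt (Suc s) (\<lambda>r c. Mf z r (if c < s then c else Suc c)))
       = - (z^2) * det (Mt s (\<lambda>r c. Mf z r (if c < s then c else Suc c)))"
      by (subst det_last_col) (auto simp: Mf_def)
    also have "Mt s (\<lambda>r c. Mf z r (if c < s then c else Suc c)) = Mt s (Mf z)"
      by (rule Mt_cong) simp
    moreover have "Mf z (Suc (Suc s)) s = z^2" "Mf z (Suc s) (Suc (Suc s)) = - (z^2)"
       "Mf z s (Suc s) = - (z^2)"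
      by (simp_all add: Mf_def)
    ultimately show ?thesis by (simp add: F_def Dm_def power_add eval_nat_numeral)
  qed
  finally show ?thesis by (simp add: algebra_simps)
qed

lemma Dm_base: "Dm z 0 = 1" "Dm z 1 = 1" "Dm z 2 = 1 - 2 * z^3"
proof -
  show "Dm z 0 = 1" by (simp add: Dm_def)
  show D1: "Dm z 1 = 1" unfolding Dm_def One_nat_def by (subst det_last_col) (auto simp: Mf_def)
  have "Dm z 2 = (\<Sum>j<Suc (Suc 0). Mf z (Suc 0) j * ((-1)^(Suc 0+j) *
      det (Mt (Suc 0) (\<lambda>r c. Mf z r (if c < j then c else Suc c)))))"
    unfolding Dm_def numeral_2_eq_2 by (rule det_row_exp)
  also have "\<dots> = Mf z 1 0 * (- Mf z 0 1) + Mf z 1 1 * Mf z 0 0"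
    by (simp add: det_last_col[of 0])
  also have "\<dots> = 1 - 2 * z^3" by (simp add: Mf_def eval_nat_numeral)
  finally show "Dm z 2 = 1 - 2 * z^3" .
qed


lemma am_rec: "am z (Suc (Suc (Suc s))) = - 2 * z * am z (Suc (Suc s)) - z^2 * am z (Suc s) - z^6 * am z s"
proof -
  define F where "F = (\<lambda>i. Af z i (Suc (Suc s)) * ((-1)^(i + Suc (Suc s)) *
      det (Mt (Suc (Suc s)) (\<lambda>r c. Af z (if r < i then r else Suc r) c))))"
  have "am z (Suc (Suc (Suc s))) = sum F {..<Suc (Suc (Suc s))}"
    unfolding am_def F_def by (rule det_col_exp)
  also have "\<dots> = sum F {..<s} + F s + F (Suc s) + F (Suc (Suc s))" by simp
  also have "sum F {..<s} = 0" by (rule sum.neutral) (simp add: F_def Af_def Mf_def)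
  also have "F (Suc (Suc s)) = - 2 * z * am z (Suc (Suc s))"
  proof -
    have "Mt (Suc (Suc s)) (\<lambda>r c. Af z (if r < Suc (Suc s) then r else Suc r) c) = Mt (Suc (Suc s)) (Af z)"
      by (rule Mt_cong) simp
    moreover have "Af z (Suc (Suc s)) (Suc (Suc s)) = - 2 * z" by (simp add: Af_def Mf_def)
    ultimately show ?thesis by (simp add: F_def am_def)
  qed
  also have "F (Suc s) = - (z^2) * am z (Suc s)"
  proof -
    have "det (Mt (Suc (Suc s)) (\<lambda>r c. Af z (if r < Suc s then r else Suc r) c))
       = z^2 * det (Mt (Suc s) (\<lambda>r c. Af z (if r < Suc s then r else Suc r) c))"
      by (subst det_last_row) (auto simp: Af_def Mf_def)
    also have "Mt (Suc s) (\<lambda>r c. Af z (if r < Suc s then r else Suc r) c) = Mt (Suc s) (Af z)"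
      by (rule Mt_cong) simp
    finally have d: "det (Mt (Suc (Suc s)) (\<lambda>r c. Af z (if r < Suc s then r else Suc r) c))
       = z^2 * am z (Suc s)" unfolding am_def .
    have "Af z (Suc s) (Suc (Suc s)) = 1" by (simp add: Af_def Mf_def)
    with d show ?thesis by (simp add: F_def power_add)
  qed
  also have "F s = - (z^6) * am z s"
  proof -
    have "det (Mt (Suc (Suc s)) (\<lambda>r c. Af z (if r < s then r else Suc r) c))
       = z^2 * det (Mt (Suc s) (\<lambda>r c. Af z (if r < s then r else Suc r) c))"
      by (subst det_last_row) (auto simp: Af_def Mf_def)
    also have "det (Mt (Suc s) (\<lambda>r c. Af z (if r < s then r else Suc r) c))
       = z^2 * det (Mt s (\<lambda>r c. Af z (if r < s then r else Suc r) c))"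
      by (subst det_last_row) (auto simp: Af_def Mf_def)
    also have "Mt s (\<lambda>r c. Af z (if r < s then r else Suc r) c) = Mt s (Af z)"
      by (rule Mt_cong) simp
    finally have d: "det (Mt (Suc (Suc s)) (\<lambda>r c. Af z (if r < s then r else Suc r) c))
       = z^2 * (z^2 * am z s)" unfolding am_def .
    have "Af z s (Suc (Suc s)) = - (z^2)" by (simp add: Af_def Mf_def)
    with d show ?thesis by (simp add: F_def power_add eval_nat_numeral)
  qed
  finally have h: "am z (Suc (Suc (Suc s))) = 0 + - (z^6) * am z s + - (z^2) * am z (Suc s) + - 2 * z * am z (Suc (Suc s))" .
  show ?thesis unfolding h by (simp add: algebra_simps)
qed

lemma am_base: "am z 0 = 1" "am z 1 = - 2 * z" "am z 2 = 3 * z^2"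
proof -
  show "am z 0 = 1" by (simp add: am_def)
  show "am z 1 = - 2 * z" unfolding am_def One_nat_def
    by (subst det_last_col) (auto simp: Af_def Mf_def)
  have "am z 2 = (\<Sum>j<Suc (Suc 0). Af z (Suc 0) j * ((-1)^(Suc 0+j) *
      det (Mt (Suc 0) (\<lambda>r c. Af z r (if c < j then c else Suc c)))))"
    unfolding am_def numeral_2_eq_2 by (rule det_row_exp)
  also have "\<dots> = Af z 1 0 * (- Af z 0 1) + Af z 1 1 * Af z 0 0"
    by (simp add: det_last_col[of 0])
  also have "\<dots> = 3 * z^2" by (simp add: Af_def Mf_def eval_nat_numeral)
  finally show "am z 2 = 3 * z^2" .
qed

lemma tau_small[simp]: "tau z 0 = 0" "tau z (Suc 0) = 1" "tau z (Suc (Suc 0)) = 2"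
  "tau z (Suc (Suc (Suc 0))) = 3"
  using tau_facts(1,2,3)[of z] tau_facts(4)[of z 0] by (simp_all add: numeral_2_eq_2 numeral_3_eq_3)

lemma am_base': "am z (Suc 0) = - 2 * z" "am z (Suc (Suc 0)) = 3 * z^2"
  using am_base(2,3) by (simp_all add: numeral_2_eq_2)

lemma am_tau: "(-1)^m * am z m = z^m * tau z (Suc m)"
proof (induction m rule: less_induct)
  case (less m)
  consider "m = 0" | "m = 1" | "m = 2" | s where "m = Suc (Suc (Suc s))"
    by (metis One_nat_def Suc_1 not0_implies_Suc)
  then show ?case
  proof cases
    case 1 then show ?thesis by (simp add: am_base)
  next
    case 2 then show ?thesis by (simp add: am_base')
  next
    case 3 then show ?thesis
      using tau_facts(4)[of z 0] by (simp add: am_base' eval_nat_numeral)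
  next
    case (4 s)
    have i1: "(-1)^(Suc (Suc s)) * am z (Suc (Suc s)) = z^(Suc (Suc s)) * tau z (Suc (Suc (Suc s)))"
      using less[of "Suc (Suc s)"] 4 by simp
    have i2: "(-1)^(Suc s) * am z (Suc s) = z^(Suc s) * tau z (Suc (Suc s))"
      using less[of "Suc s"] 4 by simp
    have i3: "(-1)^s * am z s = z^s * tau z (Suc s)"
      using less[of s] 4 by simp
    have "(-1)^m * am z m = 2 * z * ((-1)^(Suc (Suc s)) * am z (Suc (Suc s)))
        - z^2 * ((-1)^(Suc s) * am z (Suc s)) + z^6 * ((-1)^s * am z s)"
      unfolding 4 am_rec by (simp add: algebra_simps)
    also have "\<dots> = z^m * tau z (Suc m)"
      unfolding i1 i2 i3 4 tau_facts(4)[of z "Suc s"] by (simp add: algebra_simps eval_nat_numeral)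
    finally show ?thesis .
  qed
qed


lemma Nn_0: "Nn z k 0 = am z k"
  unfolding Nn_def am_def by (simp, rule arg_cong[where f=det], rule Mt_cong) (simp add: Nf_def Af_def)

lemma Nn_k0: "Nn z 0 m = Dm z m"
  unfolding Nn_def Dm_def by (simp, rule arg_cong[where f=det], rule Mt_cong) (simp add: Nf_def Mf_def)

lemma Nn_1: "Nn z (Suc j) 1 = am z (Suc j) + z^4 * am z j"
proof -
  define F where "F = (\<lambda>c. Nf z (Suc j) (Suc j) c * ((-1)^(Suc j + c) *
      det (Mt (Suc j) (\<lambda>r c'. Nf z (Suc j) r (if c' < c then c' else Suc c')))))"
  have "Nn z (Suc j) 1 = sum F {..<Suc (Suc j)}"
    unfolding Nn_def F_def by (simp add: det_row_exp)
  also have "\<dots> = sum F {..<j} + F j + F (Suc j)" by simp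
  also have "sum F {..<j} = 0" by (rule sum.neutral) (simp add: F_def Nf_def Mf_def)
  also have "F (Suc j) = am z (Suc j)"
  proof -
    have "Mt (Suc j) (\<lambda>r c'. Nf z (Suc j) r (if c' < Suc j then c' else Suc c')) = Mt (Suc j) (Af z)"
      by (rule Mt_cong) (simp add: Nf_def Af_def)
    moreover have "Nf z (Suc j) (Suc j) (Suc j) = 1" by (simp add: Nf_def Mf_def)
    ultimately show ?thesis by (simp add: F_def am_def)
  qed
  also have "F j = z^4 * am z j"
  proof -
    have "det (Mt (Suc j) (\<lambda>r c'. Nf z (Suc j) r (if c' < j then c' else Suc c')))
       = - (z^2) * det (Mt j (\<lambda>r c'. Nf z (Suc j) r (if c' < j then c' else Suc c')))"
      by (subst det_last_col) (auto simp: Nf_def Mf_def)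
    also have "Mt j (\<lambda>r c'. Nf z (Suc j) r (if c' < j then c' else Suc c')) = Mt j (Af z)"
      by (rule Mt_cong) (simp add: Nf_def Af_def)
    finally have d: "det (Mt (Suc j) (\<lambda>r c'. Nf z (Suc j) r (if c' < j then c' else Suc c')))
       = - (z^2) * am z j" unfolding am_def .
    have "Nf z (Suc j) (Suc j) j = z^2" by (simp add: Nf_def Mf_def)
    with d show ?thesis by (simp add: F_def power_add eval_nat_numeral)
  qed
  finally show ?thesis by (simp add: algebra_simps)
qed

lemma Nn_2: "Nn z k 2 = Nn z k 1 - 2 * z^3 * am z k"
proof -
  define F where "F = (\<lambda>c. Nf z k (Suc k) c * ((-1)^(Suc k + c) *
      det (Mt (Suc k) (\<lambda>r c'. Nf z k r (if c' < c then c' else Suc c')))))"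
  have "Nn z k 2 = sum F {..<Suc (Suc k)}"
    unfolding Nn_def F_def by (simp add: det_row_exp numeral_2_eq_2)
  also have "\<dots> = sum F {..<k} + F k + F (Suc k)" by simp
  also have "sum F {..<k} = 0" by (rule sum.neutral) (simp add: F_def Nf_def Mf_def)
  also have "F (Suc k) = Nn z k 1"
  proof -
    have "Mt (Suc k) (\<lambda>r c'. Nf z k r (if c' < Suc k then c' else Suc c')) = Mt (Suc k) (Nf z k)"
      by (rule Mt_cong) simp
    moreover have "Nf z k (Suc k) (Suc k) = 1" by (simp add: Nf_def Mf_def)
    ultimately show ?thesis by (simp add: F_def Nn_def)
  qed
  also have "F k = - 2 * z^3 * am z k"
  proof -
    have "det (Mt (Suc k) (\<lambda>r c'. Nf z k r (if c' < k then c' else Suc c')))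
       = - (z^2) * det (Mt k (\<lambda>r c'. Nf z k r (if c' < k then c' else Suc c')))"
      by (subst det_last_col) (auto simp: Nf_def Mf_def)
    also have "Mt k (\<lambda>r c'. Nf z k r (if c' < k then c' else Suc c')) = Mt k (Af z)"
      by (rule Mt_cong) (simp add: Nf_def Af_def)
    finally have d: "det (Mt (Suc k) (\<lambda>r c'. Nf z k r (if c' < k then c' else Suc c')))
       = - (z^2) * am z k" unfolding am_def .
    have "Nf z k (Suc k) k = - 2 * z" by (simp add: Nf_def Mf_def)
    with d show ?thesis by (simp add: F_def power_add eval_nat_numeral)
  qed
  finally show ?thesis by (simp add: algebra_simps)
qed

lemma Nn_rec: "Nn z k (Suc (Suc (Suc m))) = Nn z k (Suc (Suc m)) - 2 * z^3 * Nn z k (Suc m) + z^6 * Nn z k m"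
proof -
  define S where "S = k + m"
  have kS: "k \<le> S" unfolding S_def by simp
  have N3: "Nn z k (Suc (Suc (Suc m))) = det (Mt (Suc (Suc (Suc S))) (Nf z k))"
    and N2: "Nn z k (Suc (Suc m)) = det (Mt (Suc (Suc S)) (Nf z k))"
    and N1: "Nn z k (Suc m) = det (Mt (Suc S) (Nf z k))"
    and N0: "Nn z k m = det (Mt S (Nf z k))"
    unfolding Nn_def S_def by simp_all
  define F where "F = (\<lambda>c. Nf z k (Suc (Suc S)) c * ((-1)^(Suc (Suc S) + c) *
      det (Mt (Suc (Suc S)) (\<lambda>r c'. Nf z k r (if c' < c then c' else Suc c')))))"
  have "Nn z k (Suc (Suc (Suc m))) = sum F {..<Suc (Suc (Suc S))}"
    unfolding N3 F_def by (rule det_row_exp)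
  also have "\<dots> = sum F {..<S} + F S + F (Suc S) + F (Suc (Suc S))" by simp
  also have "sum F {..<S} = 0" by (rule sum.neutral) (auto simp: F_def Nf_def Mf_def)
  also have "F (Suc (Suc S)) = Nn z k (Suc (Suc m))"
  proof -
    have "Mt (Suc (Suc S)) (\<lambda>r c'. Nf z k r (if c' < Suc (Suc S) then c' else Suc c')) = Mt (Suc (Suc S)) (Nf z k)"
      by (rule Mt_cong) simp
    moreover have "Nf z k (Suc (Suc S)) (Suc (Suc S)) = 1" using kS by (simp add: Nf_def Mf_def)
    ultimately show ?thesis by (simp add: F_def N2)
  qed
  also have "F (Suc S) = - 2 * z^3 * Nn z k (Suc m)"
  proof -
    have "det (Mt (Suc (Suc S)) (\<lambda>r c'. Nf z k r (if c' < Suc S then c' else Suc c')))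
       = - (z^2) * det (Mt (Suc S) (\<lambda>r c'. Nf z k r (if c' < Suc S then c' else Suc c')))"
      using kS by (subst det_last_col) (auto simp: Nf_def Mf_def)
    also have "Mt (Suc S) (\<lambda>r c'. Nf z k r (if c' < Suc S then c' else Suc c')) = Mt (Suc S) (Nf z k)"
      by (rule Mt_cong) simp
    finally have d: "det (Mt (Suc (Suc S)) (\<lambda>r c'. Nf z k r (if c' < Suc S then c' else Suc c')))
       = - (z^2) * Nn z k (Suc m)" unfolding N1 .
    have "Nf z k (Suc (Suc S)) (Suc S) = - 2 * z" using kS by (simp add: Nf_def Mf_def)
    with d show ?thesis by (simp add: F_def power_add eval_nat_numeral)
  qed
  also have "F S = z^6 * Nn z k m"
  proof -
    have "det (Mt (Suc (Suc S)) (\<lambda>r c'. Nf z k r (if c' < S then c' else Suc c')))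
       = - (z^2) * det (Mt (Suc S) (\<lambda>r c'. Nf z k r (if c' < S then c' else Suc c')))"
      using kS by (subst det_last_col) (auto simp: Nf_def Mf_def)
    also have "det (Mt (Suc S) (\<lambda>r c'. Nf z k r (if c' < S then c' else Suc c')))
       = - (z^2) * det (Mt S (\<lambda>r c'. Nf z k r (if c' < S then c' else Suc c')))"
      using kS by (subst det_last_col) (auto simp: Nf_def Mf_def)
    also have "Mt S (\<lambda>r c'. Nf z k r (if c' < S then c' else Suc c')) = Mt S (Nf z k)"
      by (rule Mt_cong) simp
    finally have d: "det (Mt (Suc (Suc S)) (\<lambda>r c'. Nf z k r (if c' < S then c' else Suc c')))
       = - (z^2) * (- (z^2) * Nn z k m)" unfolding N0 .
    have "Nf z k (Suc (Suc S)) S = z^2" using kS by (simp add: Nf_def Mf_def)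
    with d show ?thesis by (simp add: F_def power_add eval_nat_numeral)
  qed
  finally have h: "Nn z k (Suc (Suc (Suc m))) = 0 + z^6 * Nn z k m + - 2 * z^3 * Nn z k (Suc m) + Nn z k (Suc (Suc m))" .
  show ?thesis unfolding h by (simp add: algebra_simps)
qed


definition dd :: "'a::field \<Rightarrow> nat \<Rightarrow> 'a" where
  "dd z m = (if m = 0 then 0 else Dm z (m - 1))"

lemma dd_rec: "dd z (Suc (Suc (Suc m))) = dd z (Suc (Suc m)) - 2 * z^3 * dd z (Suc m) + z^6 * dd z m"
proof (cases m)
  case 0
  have "Dm z (Suc (Suc 0)) = 1 - 2 * z^3" using Dm_base(3) by (simp add: numeral_2_eq_2)
  moreover have "Dm z (Suc 0) = 1" using Dm_base(2) by simp
  ultimately show ?thesis using 0 by (simp add: dd_def Dm_base)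
next
  case (Suc u)
  then show ?thesis by (simp add: dd_def Dm_rec)
qed

lemma Nn_closed: "Nn z (Suc j) m = am z (Suc j) * Dm z m + z^4 * am z j * dd z m"
proof (induction m rule: less_induct)
  case (less m)
  consider "m = 0" | "m = 1" | "m = 2" | t where "m = Suc (Suc (Suc t))"
    by (metis One_nat_def Suc_1 not0_implies_Suc)
  then show ?case
  proof cases
    case 1 then show ?thesis by (simp add: Nn_0 Dm_base dd_def)
  next
    case 2 then show ?thesis using Nn_1[of z j] Dm_base(1,2)[of z] by (simp add: dd_def)
  next
    case 3
    have "dd z 2 = 1" using Dm_base(2)[of z] by (simp add: dd_def)
    then show ?thesis unfolding 3 Nn_2 Nn_1 Dm_base by (simp add: algebra_simps)
  next
    case (4 t)
    have i1: "Nn z (Suc j) (Suc (Suc t)) = am z (Suc j) * Dm z (Suc (Suc t)) + z^4 * am z j * dd z (Suc (Suc t))"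
      using less[of "Suc (Suc t)"] 4 by simp
    have i2: "Nn z (Suc j) (Suc t) = am z (Suc j) * Dm z (Suc t) + z^4 * am z j * dd z (Suc t)"
      using less[of "Suc t"] 4 by simp
    have i3: "Nn z (Suc j) t = am z (Suc j) * Dm z t + z^4 * am z j * dd z t"
      using less[of t] 4 by simp
    show ?thesis unfolding 4 Nn_rec i1 i2 i3 Dm_rec dd_rec by (simp add: algebra_simps)
  qed
qed

lemma D_eq: "D h z = Dm z h"
proof (cases "h = 0")
  case True then show ?thesis by (simp add: D_def Dm_def)
next
  case False
  have "det (T_mat h z) = det (transpose_mat (T_mat h z))"
    by (rule det_transpose[of _ h, symmetric]) (simp add: T_mat_def)
  also have "transpose_mat (T_mat h z) = Mt h (Mf z)"
    unfolding Mt_def T_mat_def by (rule eq_matI) (auto simp: Mf_def)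
  finally show ?thesis using False by (simp add: D_def Dm_def)
qed

lemma Dni_eq:
  shows "Dni (Suc (k + m)) (Suc k) z = (-1)^k * Nn z k m"
proof -
  define n where "n = Suc (k + m)"
  have assms: "n = Suc (k + m)" by (simp add: n_def)
  define G where "G = (\<lambda>p q. if q = k then (if p = 0 then 1 else 0) else Mf z p q)"
  have "Dni (Suc (k + m)) (Suc k) z = det (Mt n G)"
    unfolding Dni_def Mt_def G_def n_def
    by (rule arg_cong[where f=det], rule eq_matI)
       (auto simp: M_mat_def T_mat_def Mf_def)
  also have "\<dots> = (\<Sum>i<Suc (k+m). Mt n G $$ (i,k) * cofactor (Mt n G) i k)"
    by (simp only: assms, rule laplace_expansion_column[OF Mt_carrier]) simp
  also have "\<dots> = Mt n G $$ (0,k) * cofactor (Mt n G) 0 k +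
      (\<Sum>i<k+m. Mt n G $$ (Suc i,k) * cofactor (Mt n G) (Suc i) k)"
    by (rule sum.lessThan_Suc_shift)
  also have "(\<Sum>i<k+m. Mt n G $$ (Suc i,k) * cofactor (Mt n G) (Suc i) k) = 0"
    by (rule sum.neutral) (auto simp: Mt_def G_def assms)
  also have "mat_delete (Mt n G) 0 k = Mt (k + m) (Nf z k)"
    unfolding mat_delete_def Mt_def by (rule eq_matI) (auto simp: assms G_def Nf_def)
  then have "cofactor (Mt n G) 0 k = (-1)^k * Nn z k m"
    by (simp add: cofactor_def Nn_def)
  finally show ?thesis by (simp add: Mt_def G_def assms)
qed

theorem mainTheorem5:
  fixes z :: "'a::field" and n i :: nat
  assumes "i + 1 \<ge> 2" and "n \<ge> i + 1"
  shows "Dni n i z = z ^ (i - 1) * tau z i * D (n - i) z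
                     - z ^ (i + 2) * tau z (i - 1) * D (n - i - 1) z"
proof -
  obtain k where ik: "i = Suc k" using assms(1) by (cases i) auto
  define m where "m = n - i"
  have m1: "m \<ge> 1" and nk: "n = Suc (k + m)" using assms unfolding m_def ik by auto
  have L: "Dni n i z = (-1)^k * Nn z k m" unfolding ik nk by (rule Dni_eq)
  show ?thesis
  proof (cases k)
    case 0
    then show ?thesis using L by (simp add: ik Nn_k0 D_eq m_def)
  next
    case (Suc j)
    have a1: "(-1)^(Suc j) * am z (Suc j) = z^(Suc j) * tau z (Suc (Suc j))" by (rule am_tau)
    have a2: "(-1)^j * am z j = z^j * tau z (Suc j)" by (rule am_tau)
    have dm: "dd z m = Dm z (m - 1)" using m1 by (simp add: dd_def)
    have "Dni n i z = ((-1)^(Suc j) * am z (Suc j)) * Dm z m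
        - z^4 * ((-1)^j * am z j) * Dm z (m - 1)"
      unfolding L Suc Nn_closed dm by (simp add: algebra_simps)
    also have "\<dots> = z ^ (i - 1) * tau z i * D (n - i) z
                     - z ^ (i + 2) * tau z (i - 1) * D (n - i - 1) z"
      unfolding a1 a2 D_eq by (simp add: ik Suc m_def power_add algebra_simps eval_nat_numeral)
    finally show ?thesis .
  qed
qed

end
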